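(* Let $n\in\mathbb N$, $\beta>0$, real numbers $\kappa_{n,0},\dots,\kappa_{n,n}$ be given, $\mathbb H=L^2(\mathbb R)$, $(\mathcal Af)(x)=f(x+1)$, $g_n=\sum_{j=0}^nj!\,\kappa_{n,j}\mathbb 1_{[-j,-j+1]}$, and $\bar{\mathcal A}_n:=\mathcal A-\beta\langle g_n,\cdot\rangle\mathbb 1_{[0,1]}$. Then for any $k\in\mathbb N\cup\{0\}$, $$\bar{\mathcal A}_n^k\mathbb 1_{[0,1]}=\sum_{i=0}^k\gamma(i,k)\mathbb 1_{[-i,-i+1]},$$ where $\gamma(0,0)=1$ and, for all $k\ge1$, $$\gamma(i,k)=\begin{cases}\gamma(i-1,k-1),& i=1,\dots,k,\\ \sum_{j=0}^{(k-1)\wedge n}(-\beta)\,j!\,\kappa_{n,j}\,\gamma(j,k-1),& i=0.\end{cases}$$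
   Context: In the paper, $\kappa_{n,k}$ are the coefficients of the Bernstein polynomial approximation $K_n(t)=\sum_{k=0}^n\kappa_{n,k}t^k$ of a kernel $K$, but the identity holds for the stated definitions. $\langle\cdot,\cdot\rangle$ is the $L^2(\mathbb R)$ inner product. *)

theory Defs
  imports "HOL-Analysis.Analysis"
begin

text \<open>Functions in H = L2(R) are represented by real-valued functions on the reals;
  equality in H is equality almost everywhere w.r.t. Lebesgue measure.\<close>

definition L2_inner :: "(real \<Rightarrow> real) \<Rightarrow> (real \<Rightarrow> real) \<Rightarrow> real" where
  "L2_inner f g = (\<integral>x. f x * g x \<partial>lborel)"

definition shiftA :: "(real \<Rightarrow> real) \<Rightarrow> (real \<Rightarrow> real)" where
  "shiftA f = (\<lambda>x. f (x + 1))"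

definition g_fun :: "nat \<Rightarrow> (nat \<Rightarrow> real) \<Rightarrow> real \<Rightarrow> real" where
  "g_fun n \<kappa> = (\<lambda>x. \<Sum>j = 0..n. fact j * \<kappa> j * indicator {- real j .. - real j + 1} x)"

definition Abar :: "real \<Rightarrow> nat \<Rightarrow> (nat \<Rightarrow> real) \<Rightarrow> (real \<Rightarrow> real) \<Rightarrow> (real \<Rightarrow> real)" where
  "Abar \<beta> n \<kappa> f = (\<lambda>x. shiftA f x - \<beta> * L2_inner (g_fun n \<kappa>) f * indicator {0..1::real} x)"

text \<open>The coefficients gamma(i,k); values for i > k are never used.\<close>
fun gamma :: "real \<Rightarrow> nat \<Rightarrow> (nat \<Rightarrow> real) \<Rightarrow> nat \<Rightarrow> nat \<Rightarrow> real" where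
  "gamma \<beta> n \<kappa> 0 0 = 1"
| "gamma \<beta> n \<kappa> (Suc i) 0 = 0"
| "gamma \<beta> n \<kappa> 0 (Suc k) =
     (\<Sum>j = 0..min k n. (- \<beta>) * fact j * \<kappa> j * gamma \<beta> n \<kappa> j k)"
| "gamma \<beta> n \<kappa> (Suc i) (Suc k) = gamma \<beta> n \<kappa> i k"

end

theory Submission
  imports Defs
begin

definition Sfun :: "real \<Rightarrow> nat \<Rightarrow> (nat \<Rightarrow> real) \<Rightarrow> nat \<Rightarrow> real \<Rightarrow> real" where
  "Sfun \<beta> n \<kappa> k = (\<lambda>x. \<Sum>i = 0..k. gamma \<beta> n \<kappa> i k * indicator {- real i .. - real i + 1} x)"

lemma ind_prod_eq:
  "(\<lambda>x. indicator A x * indicator B x :: real) = indicator (A \<inter> B)"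
  by (rule ext) (simp add: indicator_inter_arith)

lemma int_ind_pair:
  "(\<integral>x. (indicator {- real j .. - real j + 1} x * indicator {- real i .. - real i + 1} x :: real) \<partial>lborel)
     = (if i = j then 1 else (0::real))"
proof -
  have e: "(\<lambda>x. indicator {- real j .. - real j + 1} x * indicator {- real i .. - real i + 1} x :: real)
      = indicator ({- real j .. - real j + 1} \<inter> {- real i .. - real i + 1})"
    by (rule ind_prod_eq)
  have "(\<integral>x. (indicator {- real j .. - real j + 1} x * indicator {- real i .. - real i + 1} x :: real) \<partial>lborel)
     = (\<integral>x. indicator ({- real j .. - real j + 1} \<inter> {- real i .. - real i + 1}) x \<partial>lborel)"
    unfolding e ..
  also have "\<dots> = measure lborel ({- real j .. - real j + 1} \<inter> {- real i .. - real i + 1})"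
    by simp
  also have "\<dots> = measure lborel {max (- real j) (- real i) .. min (- real j + 1) (- real i + 1)}"
    by (simp only: Int_atLeastAtMost)
  also have "\<dots> = (if i = j then 1 else 0)"
  proof (cases "i = j")
    case True then show ?thesis by simp
  next
    case False
    then have "i < j \<or> j < i" by auto
    then show ?thesis
    proof
      assume "i < j"
      then have "max (- real j) (- real i) = - real i" "min (- real j + 1) (- real i + 1) = - real j + 1"
        "- real j + 1 \<le> - real i" by auto
      then show ?thesis using False by (simp add: content_real_if)
    next
      assume "j < i"
      then have "max (- real j) (- real i) = - real j" "min (- real j + 1) (- real i + 1) = - real i + 1"
        "- real i + 1 \<le> - real j" by auto
      then show ?thesis using False by (simp add: content_real_if)
    qed
  qed
  finally show ?thesis .
qed

lemma integrable_ind_pair: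
  "integrable lborel (\<lambda>x. indicator {- real j .. - real j + 1} x * indicator {- real i .. - real i + 1} x :: real)"
proof -
  have "integrable lborel (indicator ({- real j .. - real j + 1} \<inter> {- real i .. - real i + 1}) :: real \<Rightarrow> real)"
    by (rule integrable_real_indicator) (auto simp: emeasure_lborel_Icc_eq)
  then show ?thesis by (simp only: ind_prod_eq)
qed

lemma integral_double_sum:
  assumes "\<And>j i. integrable M (f j i)"
  shows "integral\<^sup>L M (\<lambda>x. \<Sum>j\<in>A. \<Sum>i\<in>B. f j i x) = (\<Sum>j\<in>A. \<Sum>i\<in>B. integral\<^sup>L M (f j i))"
proof -
  have "integral\<^sup>L M (\<lambda>x. \<Sum>j\<in>A. \<Sum>i\<in>B. f j i x) = (\<Sum>j\<in>A. integral\<^sup>L M (\<lambda>x. \<Sum>i\<in>B. f j i x))"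
    by (rule Bochner_Integration.integral_sum) (intro Bochner_Integration.integrable_sum assms)
  also have "\<dots> = (\<Sum>j\<in>A. \<Sum>i\<in>B. integral\<^sup>L M (f j i))"
    by (intro sum.cong refl Bochner_Integration.integral_sum assms)
  finally show ?thesis .
qed

lemma inner_S:
  "L2_inner (g_fun n \<kappa>) (Sfun \<beta> n \<kappa> k) = (\<Sum>j = 0..min k n. fact j * \<kappa> j * gamma \<beta> n \<kappa> j k)"
proof -
  have "L2_inner (g_fun n \<kappa>) (Sfun \<beta> n \<kappa> k) =
     (\<integral>x. (\<Sum>j = 0..n. \<Sum>i = 0..k. (fact j * \<kappa> j * gamma \<beta> n \<kappa> i k) *
        (indicator {- real j .. - real j + 1} x * indicator {- real i .. - real i + 1} x)) \<partial>lborel)"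
    unfolding L2_inner_def
  proof (rule Bochner_Integration.integral_cong[OF refl])
    fix x :: real
    show "g_fun n \<kappa> x * Sfun \<beta> n \<kappa> k x = (\<Sum>j = 0..n. \<Sum>i = 0..k. (fact j * \<kappa> j * gamma \<beta> n \<kappa> i k) *
        (indicator {- real j .. - real j + 1} x * indicator {- real i .. - real i + 1} x))"
      unfolding g_fun_def Sfun_def sum_product
      by (rule sum.cong[OF refl], rule sum.cong[OF refl]) (simp only: mult_ac)
  qed
  also have "\<dots> = (\<Sum>j = 0..n. \<Sum>i = 0..k. (fact j * \<kappa> j * gamma \<beta> n \<kappa> i k) *
        (\<integral>x. indicator {- real j .. - real j + 1} x * indicator {- real i .. - real i + 1} x \<partial>lborel))"
  proof -
    have I: "\<And>j i. integrable lborel (\<lambda>x. (fact j * \<kappa> j * gamma \<beta> n \<kappa> i k) *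
        (indicator {- real j .. - real j + 1} x * indicator {- real i .. - real i + 1} x :: real))"
      by (intro integrable_mult_right integrable_ind_pair)
    show ?thesis
      by (rule trans[OF integral_double_sum[OF I]]) (simp only: integral_mult_right_zero)
  qed
  also have "\<dots> = (\<Sum>j = 0..n. \<Sum>i = 0..k. (if i = j then fact j * \<kappa> j * gamma \<beta> n \<kappa> j k else 0))"
    unfolding int_ind_pair by (intro sum.cong refl) simp
  also have "\<dots> = (\<Sum>j = 0..n. if j \<le> k then fact j * \<kappa> j * gamma \<beta> n \<kappa> j k else 0)"
    by (simp add: sum.delta')
  also have "\<dots> = (\<Sum>j \<in> {0..n} \<inter> {j. j \<le> k}. fact j * \<kappa> j * gamma \<beta> n \<kappa> j k)"
    by (simp add: sum.inter_restrict)
  also have "{0..n} \<inter> {j. j \<le> k} = {0..min k n}" by auto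
  finally show ?thesis .
qed

lemma ind_shift:
  "indicator {- real i .. - real i + 1} (x+1) = (indicator {- real (Suc i) .. - real (Suc i) + 1} x :: real)"
  by (simp add: indicator_def)

lemma step_S:
  "Abar \<beta> n \<kappa> (Sfun \<beta> n \<kappa> k) = Sfun \<beta> n \<kappa> (Suc k)"
proof
  fix x :: real
  have sh: "shiftA (Sfun \<beta> n \<kappa> k) x =
     (\<Sum>i = 0..k. gamma \<beta> n \<kappa> (Suc i) (Suc k) * indicator {- real (Suc i) .. - real (Suc i) + 1} x)"
    unfolding shiftA_def Sfun_def
    by (intro sum.cong refl) (simp only: ind_shift gamma.simps)
  have "Sfun \<beta> n \<kappa> (Suc k) x = gamma \<beta> n \<kappa> 0 (Suc k) * indicator {0..1} x +
     (\<Sum>i = 0..k. gamma \<beta> n \<kappa> (Suc i) (Suc k) * indicator {- real (Suc i) .. - real (Suc i) + 1} x)"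
    unfolding Sfun_def by (subst sum.atLeast0_atMost_Suc_shift) simp
  also have "gamma \<beta> n \<kappa> 0 (Suc k) = - \<beta> * L2_inner (g_fun n \<kappa>) (Sfun \<beta> n \<kappa> k)"
    by (simp add: inner_S sum_distrib_left mult_ac)
  finally show "Abar \<beta> n \<kappa> (Sfun \<beta> n \<kappa> k) x = Sfun \<beta> n \<kappa> (Suc k) x"
    unfolding Abar_def sh by simp
qed

lemma meas_Abar:
  assumes "f \<in> borel_measurable borel"
  shows "Abar \<beta> n \<kappa> f \<in> borel_measurable borel"
  unfolding Abar_def shiftA_def using assms by measurable

lemma AE_shift:
  assumes "AE x in lborel. P x" and "{x. P x} \<in> sets borel"
  shows "AE x in lborel. P (x + 1)"
proof -
  have "AE x in distr lborel borel ((+) 1). P x" by (subst lborel_distr_plus) (rule assms(1))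
  then have "AE x in lborel. P (1 + x)"
    using assms(2) by (subst (asm) AE_distr_iff) (auto simp: pred_def)
  then show ?thesis by (simp add: add.commute)
qed

lemma meas_S: "Sfun \<beta> n \<kappa> k \<in> borel_measurable borel"
  unfolding Sfun_def by measurable

lemma Abar_cong:
  assumes f: "f \<in> borel_measurable borel" and h: "h \<in> borel_measurable borel"
    and ae: "AE x in lborel. f x = h x"
  shows "AE x in lborel. Abar \<beta> n \<kappa> f x = Abar \<beta> n \<kappa> h x"
proof -
  have gm: "g_fun n \<kappa> \<in> borel_measurable borel" unfolding g_fun_def by measurable
  have "L2_inner (g_fun n \<kappa>) f = L2_inner (g_fun n \<kappa>) h"
    unfolding L2_inner_def
    by (rule integral_cong_AE) (use f h gm ae in auto)
  moreover have "AE x in lborel. f (x + 1) = h (x + 1)"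
    by (rule AE_shift[OF ae]) (use f h in measurable)
  ultimately show ?thesis
    unfolding Abar_def shiftA_def by auto
qed

theorem proposition3p2:
  fixes n :: nat and \<beta> :: real and \<kappa> :: "nat \<Rightarrow> real" and k :: nat
  assumes "n \<ge> 1" and "\<beta> > 0"
  shows "AE x in lborel.
    ((Abar \<beta> n \<kappa>) ^^ k) (indicator {0..1::real}) x
      = (\<Sum>i = 0..k. gamma \<beta> n \<kappa> i k * indicator {- real i .. - real i + 1} x)"
proof -
  have "((Abar \<beta> n \<kappa>) ^^ k) (indicator {0..1::real}) \<in> borel_measurable borel \<and>
     (AE x in lborel. ((Abar \<beta> n \<kappa>) ^^ k) (indicator {0..1::real}) x = Sfun \<beta> n \<kappa> k x)"
  proof (induction k)
    case 0
    show ?case by (simp add: Sfun_def)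
  next
    case (Suc k)
    then have m: "((Abar \<beta> n \<kappa>) ^^ k) (indicator {0..1::real}) \<in> borel_measurable borel"
      and ae: "AE x in lborel. ((Abar \<beta> n \<kappa>) ^^ k) (indicator {0..1::real}) x = Sfun \<beta> n \<kappa> k x"
      by auto
    have "AE x in lborel. Abar \<beta> n \<kappa> (((Abar \<beta> n \<kappa>) ^^ k) (indicator {0..1::real})) x
        = Abar \<beta> n \<kappa> (Sfun \<beta> n \<kappa> k) x"
      by (rule Abar_cong[OF m meas_S ae])
    then show ?case using meas_Abar[OF m] by (simp add: step_S)
  qed
  then show ?thesis by (simp add: Sfun_def)
qed

end
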